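(* Assume the transversality condition holds at $(t^*,\bm x^* )\in I\times S$, and that PWS solutions $\bm x(t;\bm y,s)$ are Lipschitz continuous in the initial data $(\bm y,s)$. Then there exists $\epsilon>0$ such that for all $\bm y\in K^\epsilon_+:=\bar B_\epsilon(\bm x^* )\cap S$ and $(t,s)\in J^\epsilon_+:=\{(t,s)\in[t^*,t^*+\epsilon]^2: t>s\}$, the trajectory $\bm x(t;\bm y,s)$ has no transition in the time interval $(s,t^*+\epsilon]$. Furthermore, let $$M^\epsilon_+=\tfrac12\sup_{(t,s)\in J^\epsilon_+,\ \bm y\in K^\epsilon_+}\big|\dot{\bm x}(t)\cdot H_g(\bm x(t))\dot{\bm x}(t)+\nabla g(\bm x(t))\cdot\ddot{\bm x}(t)\big|,$$ where $\bm x(t)=\bm x(t;\bm y,s)$. If $0<t-s<\min\big(t^*+\epsilon-s,\ \alpha_S^2/M^\epsilon_+\big)$, then $g(\bm x(t;\bm y,s))>0$.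
   Context: Setting: $I$ bounded open interval, $U\subset\mathbb R^d$ bounded open, switching function $g\in C^2$ with $\nabla g\ne0$, $S=\{g=0\}$, $U_\pm=\{\pm g>0\}$; PWS system $\dot{\bm x}=\bm f_\pm(t,\bm x)$ on $U_\pm$, $\bm f_\pm\in C^1(I\times(U_\pm\cup S)\to\mathbb R^d)$. Transversality: nonzero $\alpha_S$ with $\nabla g(\bm x^* )\cdot\bm f_\pm(t^*,\bm x^* )\ge\alpha_S^2$ on $I\times S$. Solutions satisfy (H1) finitely many transition times (times at which $\bm x(t)\in S$); (H2) one-sided limits of $\dot{\bm x}$ at a transition equal $\bm f_\pm$ on the side in $U_\pm$; (H3) $\bm x$ is $C^2$ with bounded $\ddot{\bm x}$ away from transitions. $\bm x(t;\bm y,s)$ denotes the PWS solution with $\bm x(s)=\bm y$ (for $\bm y\in S$ and $t>s$ it evolves by $\bm f_+$). $H_g$ is the Hessian of $g$; $\bar B_\epsilon$ is a closed ball. *)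

theory Defs
  imports "HOL-Analysis.Analysis"
begin

definition Uplus :: "'a set \<Rightarrow> ('a \<Rightarrow> real) \<Rightarrow> 'a set" where
  "Uplus U g = {x \<in> U. g x > 0}"
definition Uminus :: "'a set \<Rightarrow> ('a \<Rightarrow> real) \<Rightarrow> 'a set" where
  "Uminus U g = {x \<in> U. g x < 0}"
definition Sset :: "'a set \<Rightarrow> ('a \<Rightarrow> real) \<Rightarrow> 'a set" where
  "Sset U g = {x \<in> U. g x = 0}"

definition C1_on :: "('a::real_normed_vector \<Rightarrow> 'b::real_normed_vector) \<Rightarrow> 'a set \<Rightarrow> bool" where
  "C1_on F D \<longleftrightarrow> (\<exists>F'. (\<forall>z\<in>D. (F has_derivative F' z) (at z within D))
                        \<and> (\<forall>h. continuous_on D (\<lambda>z. F' z h)))"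

definition vd :: "(real \<Rightarrow> 'a::real_normed_vector) \<Rightarrow> real \<Rightarrow> 'a" where
  "vd x t = vector_derivative x (at t)"
definition vdd :: "(real \<Rightarrow> 'a::real_normed_vector) \<Rightarrow> real \<Rightarrow> 'a" where
  "vdd x t = vector_derivative (vd x) (at t)"

definition pws_solution ::
  "real set \<Rightarrow> 'a::euclidean_space set \<Rightarrow> ('a \<Rightarrow> real) \<Rightarrow> (real \<Rightarrow> 'a \<Rightarrow> 'a)
    \<Rightarrow> (real \<Rightarrow> 'a \<Rightarrow> 'a) \<Rightarrow> (real \<Rightarrow> 'a) \<Rightarrow> bool" where
  "pws_solution J U g fp fm x \<longleftrightarrow>
     is_interval J \<and> (\<forall>t\<in>J. x t \<in> U) \<and> continuous_on J x
     \<comment> \<open>ODE away from transitions\<close>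
     \<and> (\<forall>t\<in>J. g (x t) > 0 \<longrightarrow> (x has_vector_derivative fp t (x t)) (at t within J))
     \<and> (\<forall>t\<in>J. g (x t) < 0 \<longrightarrow> (x has_vector_derivative fm t (x t)) (at t within J))
     \<comment> \<open>(H1) finitely many transition times\<close>
     \<and> finite {t \<in> J. g (x t) = 0}
     \<comment> \<open>(H2) one-sided limits of the derivative at transitions\<close>
     \<and> (\<forall>t\<in>J. g (x t) = 0 \<longrightarrow>
          ((\<forall>\<^sub>F \<tau> in at t within (J \<inter> {t<..}). g (x \<tau>) > 0)
              \<longrightarrow> (vd x \<longlongrightarrow> fp t (x t)) (at t within (J \<inter> {t<..})))
        \<and> ((\<forall>\<^sub>F \<tau> in at t within (J \<inter> {t<..}). g (x \<tau>) < 0)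
              \<longrightarrow> (vd x \<longlongrightarrow> fm t (x t)) (at t within (J \<inter> {t<..})))
        \<and> ((\<forall>\<^sub>F \<tau> in at t within (J \<inter> {..<t}). g (x \<tau>) > 0)
              \<longrightarrow> (vd x \<longlongrightarrow> fp t (x t)) (at t within (J \<inter> {..<t})))
        \<and> ((\<forall>\<^sub>F \<tau> in at t within (J \<inter> {..<t}). g (x \<tau>) < 0)
              \<longrightarrow> (vd x \<longlongrightarrow> fm t (x t)) (at t within (J \<inter> {..<t}))))
     \<comment> \<open>(H3) C^2 with bounded second derivative away from transitions\<close>
     \<and> (let J0 = {t \<in> interior J. g (x t) \<noteq> 0} in
          (\<forall>t\<in>J0. (vd x has_vector_derivative vdd x t) (at t))
          \<and> continuous_on J0 (vdd x)
          \<and> bounded (vdd x ` J0))"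

text \<open>The quantity M^eps_+ (as an extended real; it may be infinite).\<close>
definition Mplus ::
  "'a::euclidean_space set \<Rightarrow> ('a \<Rightarrow> real) \<Rightarrow> ('a \<Rightarrow> 'a) \<Rightarrow> ('a \<Rightarrow> 'a \<Rightarrow> 'a)
     \<Rightarrow> (real \<Rightarrow> 'a \<Rightarrow> real \<Rightarrow> 'a) \<Rightarrow> real \<Rightarrow> 'a \<Rightarrow> real \<Rightarrow> ereal" where
  "Mplus U g Dg Hg X tst xst \<epsilon> =
     ereal (1/2) *
     (SUP z \<in> {(t, s, y). t \<in> {tst..tst+\<epsilon>} \<and> s \<in> {tst..tst+\<epsilon>} \<and> t > s
                          \<and> y \<in> cball xst \<epsilon> \<inter> Sset U g}.
        (case z of (t, s, y) \<Rightarrow>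
          ereal \<bar>vd (\<lambda>\<tau>. X \<tau> y s) t \<bullet> Hg (X t y s) (vd (\<lambda>\<tau>. X \<tau> y s) t)
                + Dg (X t y s) \<bullet> vdd (\<lambda>\<tau>. X \<tau> y s) t\<bar>))"

end

theory Submission imports Defs begin

lemma sign_lemma:
  fixes f :: "real \<Rightarrow> real"
  assumes cont: "continuous_on {s<..<c} f" and nz: "\<forall>\<tau>\<in>{s<..<c}. f \<tau> \<noteq> 0"
    and ev: "eventually (\<lambda>\<tau>. f \<tau> > 0) (at_right s)" and t: "\<tau> \<in> {s<..<c}"
  shows "f \<tau> > 0"
proof (rule ccontr)
  assume neg: "\<not> f \<tau> > 0"
  from ev obtain b where b: "b > s" "\<And>y. y > s \<Longrightarrow> y < b \<Longrightarrow> f y > 0"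
    unfolding eventually_at_right_field by blast
  define \<tau>1 where "\<tau>1 = (s + min b \<tau>) / 2"
  have t1: "s < \<tau>1" "\<tau>1 < b" "\<tau>1 < \<tau>" using b t by (auto simp: \<tau>1_def)
  have "f \<tau>1 > 0" using b t1 by auto
  moreover have "f \<tau> \<le> 0" using neg by simp
  moreover have "continuous_on {\<tau>1..\<tau>} f"
    by (rule continuous_on_subset[OF cont]) (use t1 t in auto)
  ultimately obtain x where "\<tau>1 \<le> x" "x \<le> \<tau>" "f x = 0"
    using IVT2'[of f \<tau> 0 \<tau>1] t1 by force
  then show False using nz t1 t by auto
qed

lemma dist_pair_small:
  fixes t t0 :: real and x x0 :: "'a::real_normed_vector"
  assumes "dist t t0 < d/2" "dist x x0 < d/2"
  shows "dist (t, x) (t0, x0) < d"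
proof -
  have "d > 0" using assms zero_le_dist[of t t0] by linarith
  have "(dist t t0)^2 < (d/2)^2" using assms by (intro power_strict_mono) auto
  moreover have "(dist x x0)^2 < (d/2)^2" using assms by (intro power_strict_mono) auto
  ultimately have "(dist t t0)^2 + (dist x x0)^2 < d^2" using zero_le_power2[of "dist t t0"] zero_le_power2[of "dist x x0"] by (simp add: power_divide, linarith)
  then have "sqrt ((dist t t0)^2 + (dist x x0)^2) < sqrt (d^2)" by (rule real_sqrt_less_mono)
  then show ?thesis using \<open>d > 0\<close> by (simp add: dist_Pair_Pair)
qed

theorem lemmaB1:
  fixes a b :: real and U :: "'a::euclidean_space set"
    and g :: "'a \<Rightarrow> real" and Dg :: "'a \<Rightarrow> 'a" and Hg :: "'a \<Rightarrow> 'a \<Rightarrow> 'a"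
    and fp fm :: "real \<Rightarrow> 'a \<Rightarrow> 'a"
    and X :: "real \<Rightarrow> 'a \<Rightarrow> real \<Rightarrow> 'a"
    and \<alpha> tst :: real and xst :: 'a
  assumes I: "a < b"
    and U: "open U" "bounded U"
    and g_grad: "\<And>x. x \<in> U \<Longrightarrow> (g has_derivative (\<lambda>h. Dg x \<bullet> h)) (at x)"
    and g_hess: "\<And>x. x \<in> U \<Longrightarrow> (Dg has_derivative Hg x) (at x)"
    and g_C2: "\<And>h. continuous_on U (\<lambda>x. Hg x h)"
    and g_nondeg: "\<And>x. x \<in> U \<Longrightarrow> Dg x \<noteq> 0"
    and fp_C1: "C1_on (\<lambda>(t, x). fp t x) ({a<..<b} \<times> (Uplus U g \<union> Sset U g))"
    and fm_C1: "C1_on (\<lambda>(t, x). fm t x) ({a<..<b} \<times> (Uminus U g \<union> Sset U g))"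
    and alpha: "\<alpha> \<noteq> 0"
    and transv: "\<And>t x. t \<in> {a<..<b} \<Longrightarrow> x \<in> Sset U g \<Longrightarrow>
                   Dg x \<bullet> fp t x \<ge> \<alpha>\<^sup>2 \<and> Dg x \<bullet> fm t x \<ge> \<alpha>\<^sup>2"
    and pt: "tst \<in> {a<..<b}" "xst \<in> Sset U g"
    and sol: "\<And>s y. s \<in> {a<..<b} \<Longrightarrow> y \<in> U \<Longrightarrow>
                pws_solution {t \<in> {a<..<b}. s \<le> t} U g fp fm (\<lambda>t. X t y s)
                \<and> X s y s = y
                \<and> (g y = 0 \<longrightarrow> (\<forall>\<^sub>F t in at_right s. g (X t y s) > 0))"
    and lip: "\<exists>L. \<forall>s\<in>{a<..<b}. \<forall>s'\<in>{a<..<b}. \<forall>y\<in>U. \<forall>y'\<in>U. \<forall>t\<in>{a<..<b}.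
                s \<le> t \<longrightarrow> s' \<le> t \<longrightarrow>
                norm (X t y s - X t y' s') \<le> L * (norm (y - y') + \<bar>s - s'\<bar>)"
  shows "\<exists>\<epsilon>>0. {tst..tst+\<epsilon>} \<subseteq> {a<..<b}
           \<and> (\<forall>y \<in> cball xst \<epsilon> \<inter> Sset U g. \<forall>t s.
                 t \<in> {tst..tst+\<epsilon>} \<and> s \<in> {tst..tst+\<epsilon>} \<and> t > s \<longrightarrow>
                 (\<forall>\<tau> \<in> {s<..tst+\<epsilon>}. g (X \<tau> y s) \<noteq> 0))
           \<and> (\<forall>y \<in> cball xst \<epsilon> \<inter> Sset U g. \<forall>t s.
                 t \<in> {tst..tst+\<epsilon>} \<and> s \<in> {tst..tst+\<epsilon>} \<and> t > s \<longrightarrow>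
                 0 < t - s \<longrightarrow> t - s < tst + \<epsilon> - s \<longrightarrow>
                 ereal (t - s) * Mplus U g Dg Hg X tst xst \<epsilon> < ereal (\<alpha>\<^sup>2) \<longrightarrow>
                 g (X t y s) > 0)"
proof -
  obtain L0 where L0: "\<forall>s\<in>{a<..<b}. \<forall>s'\<in>{a<..<b}. \<forall>y\<in>U. \<forall>y'\<in>U. \<forall>t\<in>{a<..<b}.
                s \<le> t \<longrightarrow> s' \<le> t \<longrightarrow>
                norm (X t y s - X t y' s') \<le> L0 * (norm (y - y') + \<bar>s - s'\<bar>)"
    using lip by blast
  define L where "L = max L0 0"
  have L0le: "L \<ge> 0" unfolding L_def by simp
  have Lip: "norm (X t y s - X t y' s') \<le> L * (norm (y - y') + \<bar>s - s'\<bar>)"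
    if "s\<in>{a<..<b}" "s'\<in>{a<..<b}" "y\<in>U" "y'\<in>U" "t\<in>{a<..<b}" "s \<le> t" "s' \<le> t" for s s' y y' t
  proof -
    have "norm (X t y s - X t y' s') \<le> L0 * (norm (y - y') + \<bar>s - s'\<bar>)"
      using L0 that by blast
    also have "\<dots> \<le> L * (norm (y - y') + \<bar>s - s'\<bar>)"
      by (rule mult_right_mono) (auto simp: L_def)
    finally show ?thesis .
  qed
  define D where "D = {a<..<b} \<times> (Uplus U g \<union> Sset U g)"
  define F where "F = (\<lambda>z::real\<times>'a. Dg (snd z) \<bullet> fp (fst z) (snd z))"
  have xstU: "xst \<in> U" and gxst: "g xst = 0" using pt by (auto simp: Sset_def)
  have zD: "(tst, xst) \<in> D" using pt by (auto simp: D_def)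
  have contF: "continuous (at (tst, xst) within D) F"
  proof -
    from fp_C1 obtain F' where "\<forall>z\<in>D. ((\<lambda>(t, x). fp t x) has_derivative F' z) (at z within D)"
      unfolding C1_on_def D_def by blast
    then have c1: "continuous (at (tst, xst) within D) (\<lambda>(t, x). fp t x)"
      using zD has_derivative_continuous by blast
    have "isCont Dg xst" using g_hess[OF xstU] has_derivative_continuous by blast
    then have "isCont (\<lambda>z::real\<times>'a. Dg (snd z)) (tst, xst)"
      using isCont_o2[where f=snd and a="(tst, xst)" and g=Dg] by (simp add: continuous_snd continuous_ident)
    then have c2: "continuous (at (tst, xst) within D) (\<lambda>z::real\<times>'a. Dg (snd z))"
      by (rule continuous_at_imp_continuous_within)
    have "continuous (at (tst, xst) within D) (\<lambda>z. Dg (snd z) \<bullet> (\<lambda>(t, x). fp t x) z)"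
      using c1 c2 by (intro continuous_inner) auto
    then show ?thesis unfolding F_def by (simp add: case_prod_beta)
  qed
  have a2: "\<alpha>\<^sup>2 > 0" using alpha by simp
  have F0: "F (tst, xst) \<ge> \<alpha>\<^sup>2" using transv[of tst xst] pt by (simp add: F_def)
  obtain \<delta> where d0: "\<delta> > 0" and dF: "\<forall>z\<in>D. dist z (tst, xst) < \<delta> \<longrightarrow> dist (F z) (F (tst, xst)) < \<alpha>\<^sup>2 / 2"
    using contF a2 unfolding continuous_within_eps_delta by (meson half_gt_zero)
  have Fpos: "F z > 0" if "z \<in> D" "dist z (tst, xst) < \<delta>" for z
  proof -
    have "dist (F z) (F (tst, xst)) < \<alpha>\<^sup>2 / 2" using dF that by blast
    then show ?thesis using F0 a2 unfolding dist_real_def by linarith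
  qed
  define \<epsilon> where "\<epsilon> = min ((b - tst)/2) (\<delta> / (2*(L+2)))"
  have e0: "\<epsilon> > 0" using pt d0 L0le by (auto simp: \<epsilon>_def)
  have eb: "tst + \<epsilon> < b"
  proof -
    have "\<epsilon> \<le> (b - tst)/2" unfolding \<epsilon>_def by linarith
    then show ?thesis using pt by auto
  qed
  have eL: "(L + 1) * \<epsilon> < \<delta> / 2"
  proof -
    have "(L+2) * \<epsilon> \<le> (L+2) * (\<delta> / (2*(L+2)))" using L0le by (intro mult_left_mono) (auto simp: \<epsilon>_def)
    also have "\<dots> = \<delta> / 2" using L0le by (simp add: field_simps)
    finally show ?thesis using e0 by (simp add: algebra_simps)
  qed
  have ed: "\<epsilon> < \<delta> / 2" using eL e0 L0le
  proof -
    have "0 \<le> L * \<epsilon>" using e0 L0le by simp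
    then show ?thesis using eL by (simp add: algebra_simps)
  qed
  have sub: "{tst..tst+\<epsilon>} \<subseteq> {a<..<b}" using pt eb by auto
  have claim: "g (X c y s) > 0"
    if y: "y \<in> cball xst \<epsilon> \<inter> Sset U g" and s: "s \<in> {tst..tst+\<epsilon>}" and c: "c \<in> {s<..tst+\<epsilon>}"
      and nz: "\<forall>\<tau>\<in>{s<..<c}. g (X \<tau> y s) \<noteq> 0" for y s c
  proof -
    define J where "J = {t \<in> {a<..<b}. s \<le> t}"
    have sab: "s \<in> {a<..<b}" using s sub by auto
    have yU: "y \<in> U" and gy: "g y = 0" using y by (auto simp: Sset_def)
    have S: "pws_solution J U g fp fm (\<lambda>t. X t y s)" "X s y s = y"
      "\<forall>\<^sub>F t in at_right s. g (X t y s) > 0"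
      using sol[OF sab yU] gy by (auto simp: J_def)
    have contX: "continuous_on J (\<lambda>t. X t y s)" and XU: "\<forall>t\<in>J. X t y s \<in> U"
      and ode: "\<forall>t\<in>J. g (X t y s) > 0 \<longrightarrow> ((\<lambda>t. X t y s) has_vector_derivative fp t (X t y s)) (at t within J)"
      using S(1) unfolding pws_solution_def by blast+
    have contg: "continuous_on U g"
      using g_grad has_derivative_continuous by (meson continuous_at_imp_continuous_on)
    have contf: "continuous_on J (\<lambda>t. g (X t y s))"
      using continuous_on_compose2[OF contg contX] XU by auto
    have cb: "c < b" using c eb by auto
    have scJ: "{s..c} \<subseteq> J" using sab cb c by (auto simp: J_def)
    have pos: "g (X \<tau> y s) > 0" if "\<tau> \<in> {s<..<c}" for \<tau>
    proof -
      have "{s<..<c} \<subseteq> J" using scJ by auto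
      then have "continuous_on {s<..<c} (\<lambda>t. g (X t y s))" by (rule continuous_on_subset[OF contf])
      then show ?thesis using sign_lemma[of s c "\<lambda>t. g (X t y s)", OF _ nz S(3) that] by blast
    qed
    have "g (X s y s) < g (X c y s)"
    proof (rule DERIV_pos_imp_increasing_open[where f="\<lambda>t. g (X t y s)" and a=s and b=c])
      show "s < c" using c by simp
      show "continuous_on {s..c} (\<lambda>t. g (X t y s))" using continuous_on_subset[OF contf scJ] .
      fix \<tau> assume t1: "s < \<tau>" "\<tau> < c"
      have tJ: "\<tau> \<in> J" using t1 scJ by auto
      have gp: "g (X \<tau> y s) > 0" using pos t1 by auto
      have XtU: "X \<tau> y s \<in> U" using XU tJ by auto
      have "at \<tau> within J = at \<tau>"
        by (rule at_within_open_subset[where S="{s<..<b}"]) (use t1 cb sab in \<open>auto simp: J_def\<close>)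
      then have dX: "((\<lambda>t. X t y s) has_vector_derivative fp \<tau> (X \<tau> y s)) (at \<tau>)"
        using ode tJ gp by auto
      have "((\<lambda>t. g (X t y s)) has_derivative (\<lambda>r. Dg (X \<tau> y s) \<bullet> (r *\<^sub>R fp \<tau> (X \<tau> y s)))) (at \<tau>)"
        using has_derivative_compose[OF dX[unfolded has_vector_derivative_def] g_grad[OF XtU]] by simp
      then have der: "((\<lambda>t. g (X t y s)) has_real_derivative F (\<tau>, X \<tau> y s)) (at \<tau>)"
      proof -
        have eq: "(\<lambda>r. r * (Dg (X \<tau> y s) \<bullet> fp \<tau> (X \<tau> y s))) = (*) (Dg (X \<tau> y s) \<bullet> fp \<tau> (X \<tau> y s))"
          by (rule ext) (simp add: mult.commute)
        show ?thesis using \<open>((\<lambda>t. g (X t y s)) has_derivative _) _\<close>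
          unfolding has_field_derivative_def F_def by (simp add: eq)
      qed
      have zD: "(\<tau>, X \<tau> y s) \<in> D" using tJ XtU gp by (auto simp: D_def J_def Uplus_def)
      have d1: "dist \<tau> tst < \<delta>/2" using t1 s c ed by (auto simp: dist_real_def)
      have "norm (X \<tau> y s - X \<tau> y \<tau>) \<le> L * (norm (y - y) + \<bar>s - \<tau>\<bar>)"
        using Lip[of s \<tau> y y \<tau>] sab tJ yU t1 by (auto simp: J_def)
      moreover have "X \<tau> y \<tau> = y" using sol[of \<tau> y] tJ yU by (auto simp: J_def)
      moreover have "\<bar>s - \<tau>\<bar> \<le> \<epsilon>" using t1 s c by auto
      ultimately have n1: "norm (X \<tau> y s - y) \<le> L * \<epsilon>" using L0le
        by (smt (verit, best) diff_self mult_left_mono norm_zero)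
      have n2: "dist y xst \<le> \<epsilon>" using y by (auto simp: dist_commute)
      have "dist (X \<tau> y s) xst \<le> norm (X \<tau> y s - y) + dist y xst"
        by (metis dist_norm dist_triangle)
      then have d2: "dist (X \<tau> y s) xst < \<delta>/2" using n1 n2 eL by (simp add: algebra_simps)
      have "F (\<tau>, X \<tau> y s) > 0" using Fpos[OF zD dist_pair_small[OF d1 d2]] .
      then show "\<exists>d. ((\<lambda>t. g (X t y s)) has_real_derivative d) (at \<tau>) \<and> d > 0" using der by blast
    qed
    then show ?thesis using S(2) gy by simp
  qed
  have nzall: "\<forall>\<tau> \<in> {s<..tst+\<epsilon>}. g (X \<tau> y s) \<noteq> 0"
    if y: "y \<in> cball xst \<epsilon> \<inter> Sset U g" and s: "s \<in> {tst..tst+\<epsilon>}" for y s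
  proof (rule ccontr)
    assume nt: "\<not> (\<forall>\<tau> \<in> {s<..tst+\<epsilon>}. g (X \<tau> y s) \<noteq> 0)"
    define Z where "Z = {\<tau> \<in> {s<..tst+\<epsilon>}. g (X \<tau> y s) = 0}"
    have Zne: "Z \<noteq> {}" using nt by (auto simp: Z_def)
    have sab: "s \<in> {a<..<b}" using s sub by auto
    have yU: "y \<in> U" using y by (auto simp: Sset_def)
    have "finite {t \<in> {t \<in> {a<..<b}. s \<le> t}. g (X t y s) = 0}"
      using sol[OF sab yU] unfolding pws_solution_def by blast
    moreover have "Z \<subseteq> {t \<in> {t \<in> {a<..<b}. s \<le> t}. g (X t y s) = 0}"
      using sab eb by (auto simp: Z_def)
    ultimately have Zf: "finite Z" by (rule finite_subset[rotated])
    define \<tau>0 where "\<tau>0 = Min Z"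
    have t0Z: "\<tau>0 \<in> Z" using Zf Zne by (simp add: \<tau>0_def)
    have "\<forall>\<tau>\<in>{s<..<\<tau>0}. g (X \<tau> y s) \<noteq> 0"
    proof
      fix \<tau> assume t: "\<tau> \<in> {s<..<\<tau>0}"
      show "g (X \<tau> y s) \<noteq> 0"
      proof
        assume "g (X \<tau> y s) = 0"
        then have "\<tau> \<in> Z" using t t0Z by (auto simp: Z_def)
        then have "\<tau>0 \<le> \<tau>" using Zf by (simp add: \<tau>0_def)
        then show False using t by simp
      qed
    qed
    moreover have "\<tau>0 \<in> {s<..tst+\<epsilon>}" using t0Z by (simp add: Z_def)
    ultimately have "g (X \<tau>0 y s) > 0" using claim[OF y s] by blast
    then show False using t0Z by (simp add: Z_def)
  qed
  show ?thesis
  proof (intro exI[of _ \<epsilon>] conjI e0 sub ballI allI impI)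
    fix y t s \<tau>
    assume "y \<in> cball xst \<epsilon> \<inter> Sset U g" "t \<in> {tst..tst + \<epsilon>} \<and> s \<in> {tst..tst + \<epsilon>} \<and> s < t"
      "\<tau> \<in> {s<..tst + \<epsilon>}"
    then show "g (X \<tau> y s) \<noteq> 0" using nzall by blast
  next
    fix y t s
    assume y: "y \<in> cball xst \<epsilon> \<inter> Sset U g" and ts: "t \<in> {tst..tst + \<epsilon>} \<and> s \<in> {tst..tst + \<epsilon>} \<and> s < t"
    have "\<forall>\<tau>\<in>{s<..<t}. g (X \<tau> y s) \<noteq> 0" using nzall[OF y] ts by auto
    then show "0 < g (X t y s)" using claim[OF y _ _] ts by auto
  qed
qed

end
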